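(* Let $n\ge2$ and let $h:[-1,1]\to(-\infty,+\infty]$ be continuous and finite on $[-1,1)$ with $h^{(j)}(t)\ge0$ for $j=0,1,2,3,4$ and $t\in(-1,1)$. Let $C_{2n}=\{\pm e_1,\dots,\pm e_n\}\subset\mathbb{S}^{n-1}$ be the cross-polytope. If $n\in\{2,3,4\}$, then $\mathcal{Q}_h(C_{2n})\ge\mathcal{Q}_h(C)$ for every spherical $2$-design $C\subset\mathbb{S}^{n-1}$ with $|C|=2n$. For general $n\ge2$, the same conclusion holds provided that $s_{2n}=1/\sqrt n$.
   Context: $\mathbb{S}^{n-1}$ is the unit sphere in $\mathbb{R}^n$, $e_i$ the standard basis vectors. $U_h(x,C):=\sum_{y\in C}h(x\cdot y)$, $\mathcal{Q}_h(C):=\inf_{x\in\mathbb{S}^{n-1}}U_h(x,C)$. A spherical $2$-design is a finite $C\subset\mathbb{S}^{n-1}$ on which the average of every polynomial of degree $\le2$ equals its average over the sphere. For a code $C$, $s_C:=\min_{x\in\mathbb{S}^{n-1}}\max_{y\in C}x\cdot y$ and $s_{N}:=\max\{s_C: C\subset\mathbb{S}^{n-1},\ |C|=N\}$ (so $s_N=1-\rho(N)^2/2$ where $\rho(N)$ is the best covering radius of $N$ points on $\mathbb{S}^{n-1}$). *)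

theory Defs
  imports "HOL-Analysis.Analysis" "HOL-Library.Extended_Real"
begin

definition U_h :: "(real \<Rightarrow> ereal) \<Rightarrow> 'a::real_inner \<Rightarrow> 'a set \<Rightarrow> ereal" where
  "U_h h x C = (\<Sum>y\<in>C. h (x \<bullet> y))"

definition Q_h :: "(real \<Rightarrow> ereal) \<Rightarrow> 'a::real_inner set \<Rightarrow> ereal" where
  "Q_h h C = (INF x\<in>sphere (0::'a) 1. U_h h x C)"

definition deg_le2_poly :: "(real^'n \<Rightarrow> real) \<Rightarrow> bool" where
  "deg_le2_poly p \<longleftrightarrow> (\<exists>c (b::real^'n) (A::real^'n^'n).
     \<forall>x. p x = c + (\<Sum>i\<in>UNIV. b$i * x$i) + (\<Sum>i\<in>UNIV. \<Sum>j\<in>UNIV. A$i$j * x$i * x$j))"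

text \<open>Average over the unit sphere with respect to the normalized surface measure,
  realized as the cone measure: (1/vol B) * integral over the unit ball B of f(x/|x|).\<close>
definition sphere_avg :: "(real^'n \<Rightarrow> real) \<Rightarrow> real" where
  "sphere_avg f = integral (ball 0 1) (\<lambda>x. f (x /\<^sub>R norm x)) / Henstock_Kurzweil_Integration.content (ball (0::real^'n) 1)"

definition spherical_2_design :: "(real^'n) set \<Rightarrow> bool" where
  "spherical_2_design C \<longleftrightarrow> finite C \<and> C \<noteq> {} \<and> C \<subseteq> sphere 0 1 \<and>
     (\<forall>p. deg_le2_poly p \<longrightarrow> (\<Sum>x\<in>C. p x) / real (card C) = sphere_avg p)"

definition cross_polytope :: "(real^'n) set" where
  "cross_polytope = {x. \<exists>i. x = axis i 1 \<or> x = axis i (-1)}"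

definition s_code :: "'a::real_inner set \<Rightarrow> real" where
  "s_code C = (INF x\<in>sphere (0::'a) 1. Max ((\<lambda>y. x \<bullet> y) ` C))"

definition s_best :: "'a::real_inner itself \<Rightarrow> nat \<Rightarrow> real" where
  "s_best _ N = Sup {s_code C | C::'a set. C \<subseteq> sphere 0 1 \<and> finite C \<and> card C = N}"

end

theory Submission
  imports Defs
begin


lemma deriv_mono_le:
  fixes F F' :: "real \<Rightarrow> real"
  assumes "a \<le> b"
    and d: "\<And>x. a \<le> x \<Longrightarrow> x \<le> b \<Longrightarrow> (F has_real_derivative F' x) (at x)"
    and p: "\<And>x. a \<le> x \<Longrightarrow> x \<le> b \<Longrightarrow> 0 \<le> F' x"
  shows "F a \<le> F b"
proof (cases "a = b")
  case True
  then show ?thesis by simp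
next
  case False
  with assms(1) have ab: "a < b" by simp
  from MVT2[OF ab d] obtain z where z: "a < z" "z < b" "F b - F a = (b - a) * F' z"
    by blast
  have "0 \<le> F' z" using p z by simp
  then have "0 \<le> (b - a) * F' z" using ab by simp
  with z show ?thesis by simp
qed

lemma deriv_anti_le:
  fixes F F' :: "real \<Rightarrow> real"
  assumes "a \<le> b"
    and d: "\<And>x. a \<le> x \<Longrightarrow> x \<le> b \<Longrightarrow> (F has_real_derivative F' x) (at x)"
    and p: "\<And>x. a \<le> x \<Longrightarrow> x \<le> b \<Longrightarrow> F' x \<le> 0"
  shows "F b \<le> F a"
proof -
  have "(\<lambda>x. - F x) a \<le> (\<lambda>x. - F x) b"
    by (rule deriv_mono_le[where F'="\<lambda>x. - F' x"]) (use assms in \<open>auto intro: DERIV_minus\<close>)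
  then show ?thesis by simp
qed

lemma interp_le:
  fixes EA EB EC ED :: "real \<Rightarrow> real" and a :: real
  assumes a: "0 < a" "a < 1"
    and d0: "\<And>t. -1 < t \<Longrightarrow> t < 1 \<Longrightarrow> (EA has_real_derivative EB t) (at t)"
    and d1: "\<And>t. -1 < t \<Longrightarrow> t < 1 \<Longrightarrow> (EB has_real_derivative EC t) (at t)"
    and d2: "\<And>t. -1 < t \<Longrightarrow> t < 1 \<Longrightarrow> (EC has_real_derivative ED t) (at t)"
    and ED: "\<And>t. -1 < t \<Longrightarrow> t < 1 \<Longrightarrow> 0 \<le> ED t"
    and z0: "EA (-a) = 0" and z1: "EB (-a) = 0" and z2: "EA a = 0"
    and t: "-1 < t" "t \<le> a"
  shows "EA t \<le> 0"
proof -
  have "-a < a" using a by simp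
  from MVT2[OF this, of "EA" "EB"] d0 a obtain c where c: "-a < c" "c < a" "EA a - EA (-a) = (a - -a) * EB c"
    by force
  have c1: "EB c = 0" using c z0 z2 a by simp
  from MVT2[OF c(1), of "EB" "EC"] d1 a c obtain xi where xi: "-a < xi" "xi < c" "EB c - EB (-a) = (c - -a) * EC xi"
    by force
  have xi2: "EC xi = 0" using xi c1 z1 c by simp
  have E2mono: "EC s \<le> EC u" if "-1 < s" "s \<le> u" "u < 1" for s u
    by (rule deriv_mono_le[OF that(2), of _ "ED"]) (use that d2 ED in auto)
  have E2neg: "EC s \<le> 0" if "-1 < s" "s \<le> xi" for s
    using E2mono[of s xi] that xi xi2 a c by simp
  have E2pos: "0 \<le> EC s" if "xi \<le> s" "s < 1" for s
    using E2mono[of xi s] that xi xi2 a c by simp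
  have E1a: "0 \<le> EB s" if "-1 < s" "s \<le> -a" for s
  proof -
    have "EB (-a) \<le> EB s"
      by (rule deriv_anti_le[OF that(2), of _ "EC"]) (use that d1 E2neg xi a in auto)
    then show ?thesis using z1 by simp
  qed
  have E1b: "EB s \<le> 0" if "-a \<le> s" "s \<le> c" for s
  proof (cases "s \<le> xi")
    case True
    have "EB s \<le> EB (-a)"
      by (rule deriv_anti_le[OF that(1), of _ "EC"]) (use that True d1 E2neg xi c a in auto)
    then show ?thesis using z1 by simp
  next
    case False
    have "EB s \<le> EB c"
      by (rule deriv_mono_le[OF that(2), of _ "EC"]) (use that False d1 E2pos xi c a in auto)
    then show ?thesis using c1 by simp
  qed
  have E1c: "0 \<le> EB s" if "c \<le> s" "s < 1" for s
  proof -
    have "EB c \<le> EB s"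
      by (rule deriv_mono_le[OF that(1), of _ "EC"]) (use that d1 E2pos xi c a in auto)
    then show ?thesis using c1 by simp
  qed
  show ?thesis
  proof (cases "t \<le> -a")
    case True
    have "EA t \<le> EA (-a)"
      by (rule deriv_mono_le[OF True, of _ "EB"]) (use True t d0 E1a a in auto)
    then show ?thesis using z0 by simp
  next
    case F1: False
    show ?thesis
    proof (cases "t \<le> c")
      case True
      have "EA t \<le> EA (-a)"
        by (rule deriv_anti_le[of "-a" t, of _ "EB"]) (use True F1 t d0 E1b a c in auto)
      then show ?thesis using z0 by simp
    next
      case False
      have "EA t \<le> EA a"
        by (rule deriv_mono_le[OF t(2), of _ "EB"]) (use False t d0 E1c a c in auto)
      then show ?thesis using z2 by simp
    qed
  qed
qed

lemma tangent_even:
  fixes G0 G1 G2 G3 :: "real \<Rightarrow> real" and a :: real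
  assumes a: "0 < a" "a < 1"
    and d0: "\<And>t. -1 < t \<Longrightarrow> t < 1 \<Longrightarrow> (G0 has_real_derivative G1 t) (at t)"
    and d1: "\<And>t. -1 < t \<Longrightarrow> t < 1 \<Longrightarrow> (G1 has_real_derivative G2 t) (at t)"
    and d2: "\<And>t. -1 < t \<Longrightarrow> t < 1 \<Longrightarrow> (G2 has_real_derivative G3 t) (at t)"
    and G3: "\<And>t. 0 \<le> t \<Longrightarrow> t < 1 \<Longrightarrow> 0 \<le> G3 t"
    and G10: "G1 0 = 0"
    and t: "0 \<le> t" "t < 1"
  shows "G0 a + G1 a / (2 * a) * (t^2 - a^2) \<le> G0 t"
proof -
  define w where "w s = s * G2 s - G1 s" for s
  have dw: "(w has_real_derivative s * G3 s) (at s)" if "-1 < s" "s < 1" for s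
  proof -
    have "((\<lambda>s. s * G2 s - G1 s) has_real_derivative (1 * G2 s + s * G3 s - G2 s)) (at s)"
      using that by (auto intro!: derivative_eq_intros d1 d2)
    then show ?thesis unfolding w_def by simp
  qed
  have wpos: "0 \<le> w s" if "0 \<le> s" "s < 1" for s
  proof -
    have "w 0 \<le> w s"
      by (rule deriv_mono_le[OF that(1), of _ "\<lambda>s. s * G3 s"]) (use that dw G3 in auto)
    then show ?thesis using G10 by (simp add: w_def)
  qed
  have dm: "((\<lambda>s. G1 s / s) has_real_derivative w s / (s * s)) (at s)" if "0 < s" "s < 1" for s
  proof -
    have "((\<lambda>s. G1 s / s) has_real_derivative (G2 s * s - G1 s * 1) / (s * s)) (at s)"
      using that by (auto intro!: derivative_eq_intros d1)
    then show ?thesis by (simp add: w_def mult.commute)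
  qed
  have mmono: "G1 s / s \<le> G1 u / u" if "0 < s" "s \<le> u" "u < 1" for s u
    by (rule deriv_mono_le[OF that(2), of _ "\<lambda>s. w s / (s * s)"]) (use that dm wpos in auto)
  define \<beta> where "\<beta> = G1 a / (2 * a)"
  define r where "r s = G0 s - \<beta> * s^2" for s
  have dr: "(r has_real_derivative G1 s - \<beta> * (2 * s)) (at s)" if "-1 < s" "s < 1" for s
  proof -
    have "((\<lambda>s. G0 s - \<beta> * s^2) has_real_derivative G1 s - \<beta> * (of_nat 2 * s ^ (2 - 1))) (at s)"
      using that by (auto intro!: derivative_eq_intros d0)
    then show ?thesis unfolding r_def by simp
  qed
  have rneg: "G1 s - \<beta> * (2 * s) \<le> 0" if "0 \<le> s" "s \<le> a" for s
  proof (cases "s = 0")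
    case True then show ?thesis using G10 by simp
  next
    case False
    then have s0: "0 < s" using that by simp
    have "G1 s / s \<le> G1 a / a" using mmono[of s a] s0 that a by simp
    then have "G1 s \<le> s * (G1 a / a)" using s0 by (simp add: divide_le_eq mult.commute)
    moreover have "\<beta> * (2 * s) = s * (G1 a / a)" unfolding \<beta>_def using a by (simp add: field_simps)
    ultimately show ?thesis by simp
  qed
  have rpos: "0 \<le> G1 s - \<beta> * (2 * s)" if "a \<le> s" "s < 1" for s
  proof -
    have s0: "0 < s" using that a by simp
    have "G1 a / a \<le> G1 s / s" using mmono[of a s] that a by simp
    then have "s * (G1 a / a) \<le> G1 s" using s0 by (simp add: le_divide_eq mult.commute)
    moreover have "\<beta> * (2 * s) = s * (G1 a / a)" unfolding \<beta>_def using a by (simp add: field_simps)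
    ultimately show ?thesis by simp
  qed
  have "r a \<le> r t"
  proof (cases "t \<le> a")
    case True
    show ?thesis
      by (rule deriv_anti_le[OF True, of _ "\<lambda>s. G1 s - \<beta> * (2 * s)"]) (use True t a dr rneg in auto)
  next
    case False
    show ?thesis
      by (rule deriv_mono_le[of a t, of _ "\<lambda>s. G1 s - \<beta> * (2 * s)"]) (use False t a dr rpos in auto)
  qed
  then show ?thesis unfolding r_def \<beta>_def by (simp add: algebra_simps)
qed



lemma cap_point:
  fixes C :: "(real^'n) set"
  assumes fin: "finite C" and cardC: "card C = 2 * CARD('n)"
    and s1: "\<And>v. (\<Sum>y\<in>C. v \<bullet> y) = 0"
    and s2: "\<And>v. (\<Sum>y\<in>C. (v \<bullet> y)^2) = 2 * (norm v)^2"
  shows "\<exists>x. norm x = 1 \<and> (\<forall>y\<in>C. x \<bullet> y \<le> 1 / sqrt (real CARD('n)))"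
proof -
  define n where "n = real CARD('n)"
  have n1: "1 \<le> n" unfolding n_def by (simp add: Suc_le_eq)
  define K where "K = {v::real^'n. \<forall>y\<in>C. v \<bullet> y \<le> 1}"
  have key: "\<exists>v\<in>K. sqrt n \<le> norm v"
  proof (rule ccontr)
    assume "\<not> ?thesis"
    then have lt: "\<And>v. v \<in> K \<Longrightarrow> norm v < sqrt n" by force
    have "K = (\<Inter>y\<in>C. {v. inner y v \<le> 1})" by (auto simp: K_def inner_commute)
    then have "closed K" by (simp add: closed_INT closed_halfspace_le)
    moreover have "bounded K"
      by (rule bounded_subset[OF bounded_ball[of 0 "sqrt n"]]) (use lt in auto)
    ultimately have "compact K" by (simp add: compact_eq_bounded_closed)
    moreover have "0 \<in> K" by (simp add: K_def)
    ultimately obtain v0 where v0: "v0 \<in> K" and vmax: "\<And>v. v \<in> K \<Longrightarrow> norm v \<le> norm v0"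
      using continuous_attains_sup[of K norm] continuous_on_norm_id by blast
    define A where "A = {y\<in>C. v0 \<bullet> y = 1}"
    have finA: "finite A" using fin by (simp add: A_def)
    have dimA: "CARD('n) \<le> dim A"
    proof (rule ccontr)
      assume "\<not> ?thesis"
      then have "dim A < DIM(real^'n)" by simp
      then obtain d where d0: "d \<noteq> 0" and dorth: "\<And>y. y \<in> span A \<Longrightarrow> orthogonal d y"
        using orthogonal_to_subspace_exists[of A] by blast
      define w where "w = (if 0 \<le> v0 \<bullet> d then d else - d)"
      have w0: "w \<noteq> 0" using d0 by (simp add: w_def)
      have vw: "0 \<le> v0 \<bullet> w" by (simp add: w_def)
      have wA: "w \<bullet> y = 0" if "y \<in> A" for y
        using dorth[OF span_base[OF that]] by (simp add: w_def orthogonal_def)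
      have ev: "eventually (\<lambda>t. \<forall>y\<in>C - A. (v0 + t *\<^sub>R w) \<bullet> y < 1) (at_right 0)"
      proof (rule eventually_ball_finite)
        show "finite (C - A)" using fin by simp
        show "\<forall>y\<in>C - A. eventually (\<lambda>t. (v0 + t *\<^sub>R w) \<bullet> y < 1) (at_right 0)"
        proof
          fix y assume y: "y \<in> C - A"
          then have "v0 \<bullet> y < 1" using v0 by (auto simp: K_def A_def order_le_less)
          moreover have "((\<lambda>t. (v0 + t *\<^sub>R w) \<bullet> y) \<longlongrightarrow> (v0 + 0 *\<^sub>R w) \<bullet> y) (at_right 0)"
            by (intro tendsto_intros)
          ultimately show "eventually (\<lambda>t. (v0 + t *\<^sub>R w) \<bullet> y < 1) (at_right 0)"
            by (auto intro: order_tendstoD)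
        qed
      qed
      moreover have "eventually (\<lambda>t. 0 < t) (at_right (0::real))"
        by (simp add: eventually_at_right_less)
      ultimately have "eventually (\<lambda>t. 0 < t \<and> (\<forall>y\<in>C - A. (v0 + t *\<^sub>R w) \<bullet> y < 1)) (at_right 0)"
        by (simp add: eventually_conj_iff)
      then obtain t where t0: "0 < t" and tC: "\<forall>y\<in>C - A. (v0 + t *\<^sub>R w) \<bullet> y < 1"
        using eventually_happens[of _ "at_right (0::real)"] trivial_limit_at_right_real by blast
      have "\<forall>y\<in>C. (v0 + t *\<^sub>R w) \<bullet> y \<le> 1"
      proof
        fix y assume y: "y \<in> C"
        show "(v0 + t *\<^sub>R w) \<bullet> y \<le> 1"
        proof (cases "y \<in> A")
          case True
          then show ?thesis using wA[OF True] by (simp add: A_def inner_add_left)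
        next
          case False
          then show ?thesis using tC y by force
        qed
      qed
      then have "norm (v0 + t *\<^sub>R w) \<le> norm v0" by (intro vmax) (simp add: K_def)
      then have "(norm (v0 + t *\<^sub>R w))^2 \<le> (norm v0)^2"
        by (simp add: power_mono)
      moreover have "(norm (v0 + t *\<^sub>R w))^2 = (norm v0)^2 + 2 * t * (v0 \<bullet> w) + t^2 * (norm w)^2"
        unfolding power2_norm_eq_inner by (simp add: inner_add_left inner_add_right inner_commute power2_eq_square algebra_simps)
      moreover have "0 < t^2 * (norm w)^2" using t0 w0 by simp
      moreover have "0 \<le> 2 * t * (v0 \<bullet> w)" using t0 vw by simp
      ultimately show False by linarith
    qed
    define k where "k = real (card A)"
    have kn: "n \<le> k" using dimA dim_le_card'[OF finA] unfolding k_def n_def by simp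
    define B where "B = C - A"
    have finB: "finite B" using fin by (simp add: B_def)
    have AC: "A \<subseteq> C" by (auto simp: A_def)
    have cardB: "real (card B) = 2 * n - k"
      using card_Diff_subset[OF finA AC] card_mono[OF fin AC] cardC unfolding B_def k_def n_def
      by (simp add: of_nat_diff)
    have CAB: "C = A \<union> B" "A \<inter> B = {}" using AC by (auto simp: B_def)
    have sA1: "(\<Sum>y\<in>A. v0 \<bullet> y) = k" by (simp add: A_def k_def)
    have sA2: "(\<Sum>y\<in>A. (v0 \<bullet> y)^2) = k" by (simp add: A_def k_def)
    have "(\<Sum>y\<in>C. v0 \<bullet> y) = (\<Sum>y\<in>A. v0 \<bullet> y) + (\<Sum>y\<in>B. v0 \<bullet> y)"
      unfolding CAB(1) by (rule sum.union_disjoint[OF finA finB CAB(2)])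
    then have sB1: "(\<Sum>y\<in>B. v0 \<bullet> y) = - k" using s1[of v0] sA1 by simp
    have "(\<Sum>y\<in>C. (v0 \<bullet> y)^2) = (\<Sum>y\<in>A. (v0 \<bullet> y)^2) + (\<Sum>y\<in>B. (v0 \<bullet> y)^2)"
      unfolding CAB(1) by (rule sum.union_disjoint[OF finA finB CAB(2)])
    then have sB2: "k + (\<Sum>y\<in>B. (v0 \<bullet> y)^2) = 2 * (norm v0)^2" using s2[of v0] sA2 by simp
    define S where "S = (\<Sum>y\<in>B. (v0 \<bullet> y)^2)"
    have cs: "k^2 \<le> S * (2 * n - k)"
      using sum_squared_le_sum_of_squares[of "\<lambda>y. v0 \<bullet> y" B] sB1 cardB unfolding S_def by simp
    have S0: "0 \<le> S" unfolding S_def by (simp add: sum_nonneg)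
    have "2 * n - k \<le> S"
    proof (rule ccontr)
      assume "\<not> ?thesis"
      then have lt2: "S < 2 * n - k" by simp
      have pos: "0 < 2 * n - k" using lt2 S0 by simp
      have "S * (2 * n - k) < (2 * n - k) * (2 * n - k)"
        using lt2 pos by (simp add: mult_strict_right_mono)
      also have "\<dots> \<le> k * k" using kn pos by (intro mult_mono) auto
      finally show False using cs by (simp add: power2_eq_square)
    qed
    then have "n \<le> (norm v0)^2" using sB2 unfolding S_def by simp
    then have "sqrt n \<le> sqrt ((norm v0)^2)" by (rule real_sqrt_le_mono)
    then have "sqrt n \<le> norm v0" by simp
    with lt[OF v0] show False by simp
  qed
  then obtain v where vK: "v \<in> K" and vn: "sqrt n \<le> norm v" by blast
  have sn: "0 < sqrt n" using n1 by simp
  then have nv: "0 < norm v" using vn by linarith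
  define x where "x = v /\<^sub>R norm v"
  have "norm x = 1" using nv by (simp add: x_def)
  moreover have "x \<bullet> y \<le> 1 / sqrt n" if "y \<in> C" for y
  proof -
    have "x \<bullet> y = (v \<bullet> y) / norm v" by (simp add: x_def divide_inverse_commute)
    also have "\<dots> \<le> 1 / norm v" using vK that nv by (intro divide_right_mono) (auto simp: K_def)
    also have "\<dots> \<le> 1 / sqrt n" using vn sn nv by (intro divide_left_mono) auto
    finally show ?thesis .
  qed
  ultimately show ?thesis unfolding n_def by blast
qed



lemma ball_sub_cbox: "ball (0::real^'n) 1 \<subseteq> cbox (vec (-1)) (vec 1)"
proof
  fix x :: "real^'n" assume "x \<in> ball 0 1"
  then have "norm x < 1" by simp
  then have "\<bar>x $ k\<bar> < 1" for k using component_le_norm_cart[of x k] by simp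
  then show "x \<in> cbox (vec (-1)) (vec 1)" by (auto simp: mem_box_cart abs_less_iff less_imp_le)
qed

lemma ball_has_integral_sym:
  fixes g :: "real^'n \<Rightarrow> real^'n" and f :: "real^'n \<Rightarrow> real"
  assumes inv: "\<And>x. g (g x) = x" and nrm: "\<And>x. norm (g x) = norm x"
    and cont: "\<And>x. continuous (at x) g"
    and box: "\<And>u v. \<exists>w z. g ` cbox u v = cbox w z"
    and cnt: "\<And>u v. Henstock_Kurzweil_Integration.content (g ` cbox u v) = Henstock_Kurzweil_Integration.content (cbox u v)"
    and fi: "(f has_integral i) (ball 0 1)"
  shows "((\<lambda>x. f (g x)) has_integral i) (ball 0 1)"
proof -
  let ?F = "\<lambda>x. if x \<in> ball (0::real^'n) 1 then f x else 0"
  have "(?F has_integral i) (cbox (vec (-1)) (vec 1))"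
    using has_integral_restrict[OF ball_sub_cbox] fi by blast
  from has_integral_twiddle[where r=1 and g=g and h=g, OF _ inv inv cont box box _ this] cnt
  have "((\<lambda>x. ?F (g x)) has_integral i) (g ` cbox (vec (-1)) (vec 1))" by simp
  moreover have "?F (g x) = (if x \<in> ball 0 1 then f (g x) else 0)" for x
    using nrm[of x] by simp
  ultimately have "((\<lambda>x. if x \<in> ball 0 1 then f (g x) else 0) has_integral i) (g ` cbox (vec (-1)) (vec 1))"
    by simp
  moreover have "ball 0 1 \<subseteq> g ` cbox (vec (-1)) (vec 1)"
  proof
    fix x :: "real^'n" assume "x \<in> ball 0 1"
    then have "g x \<in> cbox (vec (-1)) (vec 1)" using nrm[of x] ball_sub_cbox by auto
    then show "x \<in> g ` cbox (vec (-1)) (vec 1)" using inv[of x] by (metis image_eqI)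
  qed
  ultimately show ?thesis using has_integral_restrict by blast
qed

lemma ball_integral_sym:
  fixes g :: "real^'n \<Rightarrow> real^'n" and f :: "real^'n \<Rightarrow> real"
  assumes inv: "\<And>x. g (g x) = x" and nrm: "\<And>x. norm (g x) = norm x"
    and cont: "\<And>x. continuous (at x) g"
    and box: "\<And>u v. \<exists>w z. g ` cbox u v = cbox w z"
    and cnt: "\<And>u v. Henstock_Kurzweil_Integration.content (g ` cbox u v) = Henstock_Kurzweil_Integration.content (cbox u v)"
  shows "integral (ball 0 1) (\<lambda>x. f (g x)) = integral (ball 0 1) f"
proof (cases "f integrable_on ball 0 1")
  case True
  then obtain i where "(f has_integral i) (ball 0 1)" by blast
  with ball_has_integral_sym[OF assms] show ?thesis by (simp add: integral_unique)
next
  case False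
  have "\<not> (\<lambda>x. f (g x)) integrable_on ball 0 1"
  proof
    assume "(\<lambda>x. f (g x)) integrable_on ball 0 1"
    then obtain i where "((\<lambda>x. f (g x)) has_integral i) (ball 0 1)" by blast
    from ball_has_integral_sym[OF assms this] have "(f has_integral i) (ball 0 1)" using inv by simp
    with False show False by blast
  qed
  with False show ?thesis by (simp add: not_integrable_integral)
qed

definition reflc :: "'n \<Rightarrow> real^'n \<Rightarrow> real^'n" where
  "reflc i x = (\<chi> k. if k = i then - x$k else x$k)"

definition trn :: "'n \<Rightarrow> 'n \<Rightarrow> 'n \<Rightarrow> 'n" where
  "trn i j k = (if k = i then j else if k = j then i else k)"

definition swpc :: "'n \<Rightarrow> 'n \<Rightarrow> real^'n \<Rightarrow> real^'n" where
  "swpc i j x = (\<chi> k. x $ trn i j k)"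

lemma trn_trn [simp]: "trn i j (trn i j k) = k"
  by (auto simp: trn_def)

lemma bij_trn: "bij (trn i j)"
  by (metis bij_betw_byWitness subset_UNIV trn_trn image_subset_iff)

lemma reflc_inv [simp]: "reflc i (reflc i x) = x"
  by (simp add: reflc_def vec_eq_iff)

lemma swpc_inv [simp]: "swpc i j (swpc i j x) = x"
  by (simp add: swpc_def vec_eq_iff)

lemma reflc_inner: "reflc i x \<bullet> reflc i x = x \<bullet> x"
  by (auto simp: reflc_def inner_vec_def intro!: sum.cong)

lemma swpc_inner: "swpc i j x \<bullet> swpc i j x = x \<bullet> x"
proof -
  have "swpc i j x \<bullet> swpc i j x = (\<Sum>k\<in>UNIV. (\<lambda>k. x$k * x$k) (trn i j k))"
    by (simp add: swpc_def inner_vec_def)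
  also have "\<dots> = (\<Sum>k\<in>UNIV. x$k * x$k)"
    by (rule sum.reindex_bij_betw[OF bij_trn])
  finally show ?thesis by (simp add: inner_vec_def)
qed

lemma reflc_norm: "norm (reflc i x) = norm x"
  using reflc_inner by (simp add: norm_eq_sqrt_inner)

lemma swpc_norm: "norm (swpc i j x) = norm x"
  using swpc_inner by (simp add: norm_eq_sqrt_inner)

lemma reflc_scale: "reflc i (c *\<^sub>R x) = c *\<^sub>R reflc i x"
  by (simp add: reflc_def vec_eq_iff)

lemma swpc_scale: "swpc i j (c *\<^sub>R x) = c *\<^sub>R swpc i j x"
  by (simp add: swpc_def vec_eq_iff)

lemma reflc_lin: "linear (reflc i)"
  by (rule linearI) (auto simp: reflc_def vec_eq_iff)

lemma swpc_lin: "linear (swpc i j)"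
  by (rule linearI) (auto simp: swpc_def vec_eq_iff)

lemma reflc_cont: "continuous (at x) (reflc i)"
  using linear_continuous_at linear_conv_bounded_linear reflc_lin by blast

lemma swpc_cont: "continuous (at x) (swpc i j)"
  using linear_continuous_at linear_conv_bounded_linear swpc_lin by blast

lemma inv_image_eq: "(\<And>x. g (g x) = x) \<Longrightarrow> g ` S = {x. g x \<in> S}"
  by (auto, metis image_eqI)

lemma reflc_box: "reflc i ` cbox u v = cbox (\<chi> k. if k = i then - v$k else u$k) (\<chi> k. if k = i then - u$k else v$k)"
proof -
  have "(u$k \<le> reflc i x $k \<and> reflc i x $ k \<le> v$k) \<longleftrightarrow>
        ((\<chi> k. if k = i then - v$k else u$k) $ k \<le> x$k \<and> x$k \<le> (\<chi> k. if k = i then - u$k else v$k) $ k)" for x k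
    by (cases "k = i") (auto simp: reflc_def)
  then show ?thesis
    by (subst inv_image_eq[OF reflc_inv]) (simp only: mem_box_cart mem_Collect_eq set_eq_iff, blast)
qed

lemma swpc_box: "swpc i j ` cbox u v = cbox (\<chi> k. u $ trn i j k) (\<chi> k. v $ trn i j k)"
proof -
  have "(\<forall>k. u $ k \<le> x $ trn i j k \<and> x $ trn i j k \<le> v $ k) \<longleftrightarrow>
        (\<forall>k. u $ trn i j k \<le> x $ k \<and> x $ k \<le> v $ trn i j k)" for x
    by (metis trn_trn)
  then show ?thesis
    by (subst inv_image_eq[OF swpc_inv]) (auto simp: mem_box_cart swpc_def)
qed

lemma reflc_content: "Henstock_Kurzweil_Integration.content (reflc i ` cbox u v) = Henstock_Kurzweil_Integration.content (cbox u v)"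
proof (cases "cbox u v = {}")
  case True then show ?thesis by simp
next
  case False
  then have ne: "reflc i ` cbox u v \<noteq> {}" by simp
  have "(\<Prod>k\<in>UNIV. (if k = i then - u $ k else v $ k) - (if k = i then - v $ k else u $ k)) = (\<Prod>k\<in>UNIV. v $ k - u $ k)"
    by (auto intro!: prod.cong)
  then show ?thesis
    using ne False unfolding reflc_box
    by (simp add: content_cbox_cart)
qed

lemma swpc_content: "Henstock_Kurzweil_Integration.content (swpc i j ` cbox u v) = Henstock_Kurzweil_Integration.content (cbox u v)"
proof (cases "cbox u v = {}")
  case True then show ?thesis by simp
next
  case False
  then have ne: "swpc i j ` cbox u v \<noteq> {}" by simp
  have "(\<Prod>k\<in>UNIV. (\<lambda>k. v $ k - u $ k) (trn i j k)) = (\<Prod>k\<in>UNIV. v $ k - u $ k)"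
    by (rule prod.reindex_bij_betw[OF bij_trn])
  then show ?thesis
    using ne False unfolding swpc_box
    by (simp add: content_cbox_cart)
qed

lemma sphere_avg_sym:
  fixes g :: "real^'n \<Rightarrow> real^'n" and p :: "real^'n \<Rightarrow> real"
  assumes inv: "\<And>x. g (g x) = x" and nrm: "\<And>x. norm (g x) = norm x"
    and cont: "\<And>x. continuous (at x) g"
    and box: "\<And>u v. \<exists>w z. g ` cbox u v = cbox w z"
    and cnt: "\<And>u v. Henstock_Kurzweil_Integration.content (g ` cbox u v) = Henstock_Kurzweil_Integration.content (cbox u v)"
    and scl: "\<And>c x. g (c *\<^sub>R x) = c *\<^sub>R g x"
  shows "sphere_avg (\<lambda>z. p (g z)) = sphere_avg p"
proof -
  have "(\<lambda>x. p (g (x /\<^sub>R norm x))) = (\<lambda>x. (\<lambda>y. p (y /\<^sub>R norm y)) (g x))"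
    using scl nrm by simp
  then show ?thesis
    unfolding sphere_avg_def using ball_integral_sym[OF inv nrm cont box cnt, of "\<lambda>y. p (y /\<^sub>R norm y)"]
    by simp
qed

lemma sphere_avg_reflc: "sphere_avg (\<lambda>z. p (reflc i z)) = sphere_avg p"
  by (rule sphere_avg_sym[OF reflc_inv reflc_norm reflc_cont _ reflc_content reflc_scale]) (use reflc_box in blast)

lemma sphere_avg_swpc: "sphere_avg (\<lambda>z. p (swpc i j z)) = sphere_avg p"
  by (rule sphere_avg_sym[OF swpc_inv swpc_norm swpc_cont _ swpc_content swpc_scale]) (use swpc_box in blast)

lemma deg2_lin: "deg_le2_poly (\<lambda>x::real^'n. s * x$i)"
  unfolding deg_le2_poly_def
proof (intro exI allI)
  fix x :: "real^'n"
  show "s * x$i = 0 + (\<Sum>k\<in>UNIV. (axis i s :: real^'n)$k * x$k) + (\<Sum>k\<in>UNIV. \<Sum>l\<in>UNIV. (0::real^'n^'n)$k$l * x$k * x$l)"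
  proof -
    have "(\<Sum>k\<in>UNIV. (axis i s :: real^'n)$k * x$k) = inner (axis i s) x"
      by (simp add: inner_vec_def)
    then show ?thesis by (simp add: inner_axis')
  qed
qed

lemma deg2_quad: "deg_le2_poly (\<lambda>x::real^'n. s * x$i * x$j)"
  unfolding deg_le2_poly_def
proof (intro exI allI)
  fix x :: "real^'n"
  show "s * x$i * x$j = 0 + (\<Sum>k\<in>UNIV. (0::real^'n)$k * x$k) + (\<Sum>k\<in>UNIV. \<Sum>l\<in>UNIV. (\<chi> k l. if k = i \<and> l = j then s else 0 :: real^'n^'n)$k$l * x$k * x$l)"
  proof -
    have "(\<Sum>k\<in>UNIV. \<Sum>l\<in>UNIV. (\<chi> k l. if k = i \<and> l = j then s else 0 :: real^'n^'n)$k$l * x$k * x$l)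
        = (\<Sum>k\<in>UNIV. \<Sum>l\<in>UNIV. if l = j then (if k = i then s * x$k * x$l else 0) else 0)"
      by (intro sum.cong refl) auto
    also have "\<dots> = (\<Sum>k\<in>UNIV. if k = i then s * x$k * x$j else 0)"
      by (simp add: sum.delta')
    also have "\<dots> = s * x$i * x$j"
      by (simp add: sum.delta')
    finally have eq: "(\<Sum>k\<in>UNIV. \<Sum>l\<in>UNIV. (\<chi> k l. if k = i \<and> l = j then s else 0 :: real^'n^'n)$k$l * x$k * x$l) = s * x$i * x$j" .
    have z: "(\<Sum>k\<in>UNIV. (0::real^'n)$k * x$k) = 0" by simp
    show ?thesis unfolding z eq by simp
  qed
qed


lemma design_moments:
  fixes C :: "(real^'n) set"
  assumes des: "spherical_2_design C" and cardC: "card C = 2 * CARD('n)"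
  shows "(\<Sum>y\<in>C. v \<bullet> y) = 0" and "(\<Sum>y\<in>C. (v \<bullet> y)^2) = 2 * (norm v)^2"
proof -
  from des have fin: "finite C" and sph: "C \<subseteq> sphere 0 1"
    and avg: "\<And>p. deg_le2_poly p \<Longrightarrow> (\<Sum>x\<in>C. p x) / real (card C) = sphere_avg p"
    unfolding spherical_2_design_def by auto
  define N where "N = real (card C)"
  have N0: "0 < N" unfolding N_def cardC by simp
  have S: "(\<Sum>x\<in>C. p x) = N * sphere_avg p" if "deg_le2_poly p" for p
    using avg[OF that] N0 unfolding N_def by (simp add: field_simps)
  have lin0: "(\<Sum>y\<in>C. y$i) = 0" for i
  proof -
    have "(\<Sum>y\<in>C. (-1) * y$i) = N * sphere_avg (\<lambda>z. (-1) * z$i)" by (rule S[OF deg2_lin])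
    also have "(\<lambda>z::real^'n. (-1) * z$i) = (\<lambda>z. (\<lambda>z. 1 * z$i) (reflc i z))" by (simp add: reflc_def)
    also have "sphere_avg (\<lambda>z. (\<lambda>z::real^'n. 1 * z$i) (reflc i z)) = sphere_avg (\<lambda>z. 1 * z$i)"
      by (rule sphere_avg_reflc)
    also have "N * sphere_avg (\<lambda>z::real^'n. 1 * z$i) = (\<Sum>y\<in>C. 1 * y$i)" by (rule S[OF deg2_lin, symmetric])
    finally show ?thesis by (simp add: sum_negf reflc_def)
  qed
  have quad0: "(\<Sum>y\<in>C. y$i * y$j) = 0" if ij: "i \<noteq> j" for i j
  proof -
    have "(\<Sum>y\<in>C. (-1) * y$i * y$j) = N * sphere_avg (\<lambda>z. (-1) * z$i * z$j)" by (rule S[OF deg2_quad])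
    also have "(\<lambda>z::real^'n. (-1) * z$i * z$j) = (\<lambda>z. (\<lambda>z. 1 * z$i * z$j) (reflc i z))"
      using ij by (simp add: reflc_def)
    also have "sphere_avg (\<lambda>z. (\<lambda>z::real^'n. 1 * z$i * z$j) (reflc i z)) = sphere_avg (\<lambda>z. 1 * z$i * z$j)"
      by (rule sphere_avg_reflc)
    also have "N * sphere_avg (\<lambda>z::real^'n. 1 * z$i * z$j) = (\<Sum>y\<in>C. 1 * y$i * y$j)" by (rule S[OF deg2_quad, symmetric])
    finally show ?thesis using ij by (simp add: sum_negf reflc_def)
  qed
  have quadeq: "(\<Sum>y\<in>C. y$i * y$i) = (\<Sum>y\<in>C. y$j * y$j)" for i j
  proof -
    have "(\<Sum>y\<in>C. 1 * y$j * y$j) = N * sphere_avg (\<lambda>z. 1 * z$j * z$j)" by (rule S[OF deg2_quad])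
    also have "(\<lambda>z::real^'n. 1 * z$j * z$j) = (\<lambda>z. (\<lambda>z. 1 * z$i * z$i) (swpc i j z))"
      by (simp add: swpc_def trn_def)
    also have "sphere_avg (\<lambda>z. (\<lambda>z::real^'n. 1 * z$i * z$i) (swpc i j z)) = sphere_avg (\<lambda>z. 1 * z$i * z$i)"
      by (rule sphere_avg_swpc)
    also have "N * sphere_avg (\<lambda>z::real^'n. 1 * z$i * z$i) = (\<Sum>y\<in>C. 1 * y$i * y$i)" by (rule S[OF deg2_quad, symmetric])
    finally show ?thesis by (simp add: swpc_def trn_def)
  qed
  obtain i0 :: 'n where True by blast
  have "(\<Sum>i\<in>UNIV. \<Sum>y\<in>C. y$i * y$i) = (\<Sum>y\<in>C. y \<bullet> y)"
    by (simp add: inner_vec_def sum.swap[of _ UNIV C])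
  also have "\<dots> = (\<Sum>y\<in>C. 1)"
    using sph by (intro sum.cong refl) (auto simp: norm_eq_sqrt_inner)
  also have "\<dots> = N" by (simp add: N_def)
  finally have "(\<Sum>i\<in>UNIV. \<Sum>y\<in>C. y$i * y$i) = N" .
  moreover have "(\<Sum>i\<in>UNIV. \<Sum>y\<in>C. y$i * y$i) = real CARD('n) * (\<Sum>y\<in>C. y$i0 * y$i0)"
  proof -
    have "(\<Sum>i\<in>UNIV. \<Sum>y\<in>C. y$i * y$i) = (\<Sum>i\<in>(UNIV::'n set). \<Sum>y\<in>C. y$i0 * y$i0)"
      by (intro sum.cong refl quadeq)
    then show ?thesis by simp
  qed
  ultimately have beta: "(\<Sum>y\<in>C. y$i0 * y$i0) = 2" unfolding N_def cardC by simp
  have quad: "(\<Sum>y\<in>C. y$k * y$l) = (if k = l then 2 else 0)" for k l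
    using quad0[of k l] quadeq[of k i0] beta by (cases "k = l") auto
  show "(\<Sum>y\<in>C. v \<bullet> y) = 0"
  proof -
    have "(\<Sum>y\<in>C. v \<bullet> y) = (\<Sum>y\<in>C. \<Sum>k\<in>UNIV. v$k * y$k)" by (simp add: inner_vec_def)
    also have "\<dots> = (\<Sum>k\<in>UNIV. v$k * (\<Sum>y\<in>C. y$k))"
      by (simp add: sum.swap[of _ C UNIV] sum_distrib_left)
    also have "\<dots> = 0" by (simp add: lin0)
    finally show ?thesis .
  qed
  show "(\<Sum>y\<in>C. (v \<bullet> y)^2) = 2 * (norm v)^2"
  proof -
    have "(\<Sum>y\<in>C. (v \<bullet> y)^2) = (\<Sum>y\<in>C. \<Sum>k\<in>UNIV. \<Sum>l\<in>UNIV. (v$k * v$l) * (y$k * y$l))"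
      by (intro sum.cong refl) (simp add: inner_vec_def power2_eq_square sum_product algebra_simps)
    also have "\<dots> = (\<Sum>k\<in>UNIV. \<Sum>l\<in>UNIV. (v$k * v$l) * (\<Sum>y\<in>C. y$k * y$l))"
      by (simp add: sum.swap[of _ C UNIV] sum_distrib_left)
    also have "\<dots> = (\<Sum>k\<in>UNIV. 2 * (v$k * v$k))"
      by (simp add: quad if_distrib sum.delta mult.commute cong: if_cong)
    also have "\<dots> = 2 * (v \<bullet> v)" by (simp add: inner_vec_def sum_distrib_left)
    finally show ?thesis by (simp add: power2_norm_eq_inner)
  qed
qed



lemma cross_sum:
  fixes phi :: "real \<Rightarrow> ereal" and z :: "real^'n"
  shows "(\<Sum>y\<in>(cross_polytope::(real^'n) set). phi (z \<bullet> y)) = (\<Sum>i\<in>UNIV. phi (z$i) + phi (-(z$i)))"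
proof -
  have cp: "(cross_polytope::(real^'n) set) = range (\<lambda>i. axis i 1) \<union> range (\<lambda>i. axis i (-1))"
    by (auto simp: cross_polytope_def)
  have dj: "range (\<lambda>i. axis i (1::real)) \<inter> range (\<lambda>i::'n. axis i (-1)) = {}"
    by (auto simp: axis_eq_axis)
  have inj1: "inj (\<lambda>i::'n. axis i (1::real))" by (simp add: inj_on_def axis_eq_axis)
  have inj2: "inj (\<lambda>i::'n. axis i (-1::real))" by (simp add: inj_on_def axis_eq_axis)
  have "(\<Sum>y\<in>(cross_polytope::(real^'n) set). phi (z \<bullet> y))
      = (\<Sum>y\<in>range (\<lambda>i. axis i 1). phi (z \<bullet> y)) + (\<Sum>y\<in>range (\<lambda>i. axis i (-1)). phi (z \<bullet> y))"
    unfolding cp by (rule sum.union_disjoint) (use dj in auto)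
  also have "\<dots> = (\<Sum>i\<in>UNIV. phi (z$i)) + (\<Sum>i\<in>UNIV. phi (-(z$i)))"
    by (simp add: sum.reindex[OF inj1] sum.reindex[OF inj2] inner_axis)
  also have "\<dots> = (\<Sum>i\<in>UNIV. phi (z$i) + phi (-(z$i)))"
    by (simp add: sum.distrib)
  finally show ?thesis .
qed

theorem proposition6p6:
  fixes h :: "real \<Rightarrow> ereal"
  assumes n2: "CARD('n::finite) \<ge> 2"
    and cont: "continuous_on {-1..1} h"
    and finite_h: "\<forall>t\<in>{-1..<1}. \<bar>h t\<bar> \<noteq> \<infinity>"
    and derivs: "\<exists>D :: nat \<Rightarrow> real \<Rightarrow> real.
        (\<forall>t\<in>{-1<..<1}. D 0 t = real_of_ereal (h t)) \<and>
        (\<forall>j<4. \<forall>t\<in>{-1<..<1}. (D j has_real_derivative D (Suc j) t) (at t)) \<and>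
        (\<forall>j\<le>4. \<forall>t\<in>{-1<..<1}. D j t \<ge> 0)"
    and ncond: "CARD('n) \<in> {2, 3, 4} \<or>
        s_best TYPE(real^'n) (2 * CARD('n)) = 1 / sqrt (real CARD('n))"
    and design: "spherical_2_design (C :: (real^'n) set)"
    and cardC: "card C = 2 * CARD('n)"
  shows "Q_h h (cross_polytope :: (real^'n) set) \<ge> Q_h h C"
proof -
  obtain D :: "nat \<Rightarrow> real \<Rightarrow> real" where
    D0: "\<forall>t\<in>{-1<..<1}. D 0 t = real_of_ereal (h t)" and
    dD: "\<forall>j<4. \<forall>t\<in>{-1<..<1}. (D j has_real_derivative D (Suc j) t) (at t)" and
    Dpos: "\<forall>j\<le>4. \<forall>t\<in>{-1<..<1}. D j t \<ge> 0"
    using derivs by blast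
  define n where "n = real CARD('n)"
  define a where "a = 1 / sqrt n"
  have n2': "2 \<le> n" using n2 unfolding n_def by simp
  have sq: "1 < sqrt n" using n2' by simp
  have a0: "0 < a" using sq unfolding a_def by simp
  have a1: "a < 1" using sq unfolding a_def by simp
  have a2: "n * a^2 = 1" using n2' unfolding a_def by (simp add: power_divide)
  have hD: "h t = ereal (D 0 t)" if "-1 < t" "t < 1" for t
    using D0 finite_h that ereal_real'[of "h t"] by simp
  have d0: "(D 0 has_real_derivative D 1 t) (at t)" if "-1 < t" "t < 1" for t
    using dD that by simp
  have d1: "(D 1 has_real_derivative D 2 t) (at t)" if "-1 < t" "t < 1" for t
    using dD[rule_format, of 1 t] that by (simp add: eval_nat_numeral)
  have d2: "(D 2 has_real_derivative D 3 t) (at t)" if "-1 < t" "t < 1" for t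
    using dD[rule_format, of 2 t] that by (simp add: eval_nat_numeral)
  have d3: "(D 3 has_real_derivative D 4 t) (at t)" if "-1 < t" "t < 1" for t
    using dD[rule_format, of 3 t] that by (simp add: eval_nat_numeral)
  have d1': "(D (Suc 0) has_real_derivative D 2 t) (at t)" if "-1 < t" "t < 1" for t
    using d1[OF that] by simp
  have d0': "(D 0 has_real_derivative D (Suc 0) t) (at t)" if "-1 < t" "t < 1" for t
    using d0[OF that] by simp
  have D3pos: "0 \<le> D 3 t" if "-1 < t" "t < 1" for t
    using Dpos that by simp
  have D3mono: "D 3 s \<le> D 3 t" if "-1 < s" "s \<le> t" "t < 1" for s t
    by (rule deriv_mono_le[OF that(2), of _ "D 4"]) (use that d3 Dpos in auto)

  define \<kappa> where "\<kappa> = (D 0 a - D 0 (-a) - 2 * a * D 1 (-a)) / (4 * a^2)"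
  define f where "f t = D 0 (-a) + D 1 (-a) * (t + a) + \<kappa> * (t + a)^2" for t
  have Da: "D 0 a = D 0 (-a) + 2 * a * D 1 (-a) + 4 * a^2 * \<kappa>"
    using a0 unfolding \<kappa>_def by (simp add: field_simps)
  have hf: "D 0 t \<le> f t" if "-1 < t" "t \<le> a" for t
  proof -
    have "(\<lambda>t. D 0 t - f t) t \<le> 0"
    proof (rule interp_le[OF a0 a1, where EA="\<lambda>t. D 0 t - f t" and EB="\<lambda>t. D 1 t - (D 1 (-a) + 2 * \<kappa> * (t + a))"
          and EC="\<lambda>t. D 2 t - 2 * \<kappa>" and ED="D 3"])
      show "((\<lambda>t. D 0 t - f t) has_real_derivative D 1 t - (D 1 (-a) + 2 * \<kappa> * (t + a))) (at t)"
        if "-1 < t" "t < 1" for t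
        unfolding f_def using that by (auto intro!: derivative_eq_intros d0 d0' simp: algebra_simps)
      show "((\<lambda>t. D 1 t - (D 1 (-a) + 2 * \<kappa> * (t + a))) has_real_derivative D 2 t - 2 * \<kappa>) (at t)"
        if "-1 < t" "t < 1" for t
        using that by (auto intro!: derivative_eq_intros d1 d1')
      show "((\<lambda>t. D 2 t - 2 * \<kappa>) has_real_derivative D 3 t) (at t)"
        if "-1 < t" "t < 1" for t
        using that by (auto intro!: derivative_eq_intros d2)
    qed (use D3pos that Da in \<open>auto simp: f_def\<close>)
    then show ?thesis by simp
  qed
  have fcont: "((\<lambda>t. ereal (f t)) \<longlongrightarrow> ereal (f (-1))) (at_right (-1))"
    unfolding f_def by (intro tendsto_intros)
  have hcont_r: "(h \<longlongrightarrow> h (-1)) (at_right (-1))"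
  proof -
    have "(h \<longlongrightarrow> h (-1)) (at (-1) within {-1..1})"
      using cont by (simp add: continuous_on_def)
    then show ?thesis using at_within_Icc_at_right[of "-1::real" 1] by simp
  qed
  have hcont_l: "(h \<longlongrightarrow> h 1) (at_left 1)"
  proof -
    have "(h \<longlongrightarrow> h 1) (at 1 within {-1..1})"
      using cont by (simp add: continuous_on_def)
    then show ?thesis using at_within_Icc_at_left[of "-1::real" 1] by simp
  qed
  have hfe: "h t \<le> ereal (f t)" if "-1 \<le> t" "t \<le> a" for t
  proof (cases "t = -1")
    case True
    have ev: "eventually (\<lambda>s. h s \<le> ereal (f s)) (at_right (-1))"
    proof -
      have "eventually (\<lambda>s. s \<in> {-1<..<a}) (at_right (-1::real))"
        using a0 by (intro eventually_at_right_real) simp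
      then show ?thesis
        by eventually_elim (use hD hf a1 in auto)
    qed
    have "h (-1) \<le> ereal (f (-1))"
      by (rule tendsto_le[OF trivial_limit_at_right_real fcont hcont_r ev])
    then show ?thesis using True by simp
  next
    case False
    then show ?thesis using that hD hf a1 by simp
  qed
  have fin: "finite C" using design by (simp add: spherical_2_design_def)
  have sph: "C \<subseteq> sphere 0 1" using design by (simp add: spherical_2_design_def)
  obtain x :: "real^'n" where nx: "norm x = 1" and xC: "\<forall>y\<in>C. x \<bullet> y \<le> a"
    using cap_point[OF fin cardC design_moments(1)[OF design cardC] design_moments(2)[OF design cardC]]
    unfolding a_def n_def by blast
  have sumf: "(\<Sum>y\<in>C. f (x \<bullet> y)) = n * (D 0 a + D 0 (-a))"
  proof -
    define P where "P = D 0 (-a) + D 1 (-a) * a + \<kappa> * a^2"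
    define Q where "Q = D 1 (-a) + 2 * \<kappa> * a"
    have fe: "f t = P + Q * t + \<kappa> * t^2" for t
      unfolding f_def P_def Q_def by (simp add: power2_eq_square algebra_simps)
    have "(\<Sum>y\<in>C. f (x \<bullet> y)) = (\<Sum>y\<in>C. P) + Q * (\<Sum>y\<in>C. x \<bullet> y) + \<kappa> * (\<Sum>y\<in>C. (x \<bullet> y)^2)"
      by (simp add: fe sum.distrib sum_distrib_left)
    also have "\<dots> = 2 * n * P + 2 * \<kappa>"
      using design_moments[OF design cardC, of x] nx cardC unfolding n_def by simp
    also have "\<dots> = n * (D 0 a + D 0 (-a))"
      unfolding P_def Da using a2 by (simp add: algebra_simps)
    finally show ?thesis .
  qed
  have UC: "U_h h x C \<le> ereal (n * (D 0 a + D 0 (-a)))"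
  proof -
    have "U_h h x C = (\<Sum>y\<in>C. h (x \<bullet> y))" by (simp add: U_h_def)
    also have "\<dots> \<le> (\<Sum>y\<in>C. ereal (f (x \<bullet> y)))"
    proof (rule sum_mono)
      fix y assume y: "y \<in> C"
      have "\<bar>x \<bullet> y\<bar> \<le> norm x * norm y" by (rule Cauchy_Schwarz_ineq2)
      then have "\<bar>x \<bullet> y\<bar> \<le> 1" using nx sph y by auto
      then show "h (x \<bullet> y) \<le> ereal (f (x \<bullet> y))" using hfe xC y by (simp add: abs_le_iff)
    qed
    also have "\<dots> = ereal (n * (D 0 a + D 0 (-a)))" by (simp add: sum_ereal sumf)
    finally show ?thesis .
  qed
  have dneg: "((\<lambda>t. D j (-t)) has_real_derivative - D (Suc j) (-t)) (at t)" if "j < 4" "-1 < t" "t < 1" for j t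
  proof -
    have "(D j has_real_derivative D (Suc j) (-t)) (at (-t))" using dD that by simp
    then show ?thesis by (simp add: DERIV_mirror)
  qed
  define G0 where "G0 t = D 0 t + D 0 (-t)" for t
  define G1 where "G1 t = D 1 t - D 1 (-t)" for t
  define G2 where "G2 t = D 2 t + D 2 (-t)" for t
  define G3 where "G3 t = D 3 t - D 3 (-t)" for t
  have tang: "G0 a + G1 a / (2 * a) * (t^2 - a^2) \<le> G0 t" if "0 \<le> t" "t < 1" for t
  proof (rule tangent_even[OF a0 a1 _ _ _ _ _ that])
    show "(G0 has_real_derivative G1 t) (at t)" if "-1 < t" "t < 1" for t
      unfolding G0_def G1_def using DERIV_add[OF d0 dneg[of 0]] that by simp
    show "(G1 has_real_derivative G2 t) (at t)" if "-1 < t" "t < 1" for t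
      unfolding G1_def G2_def using DERIV_diff[OF d1 dneg[of 1]] that by (simp add: eval_nat_numeral)
    show "(G2 has_real_derivative G3 t) (at t)" if "-1 < t" "t < 1" for t
      unfolding G2_def G3_def using DERIV_add[OF d2 dneg[of 2]] that by (simp add: eval_nat_numeral)
    show "0 \<le> G3 t" if "0 \<le> t" "t < 1" for t
      unfolding G3_def using D3mono[of "-t" t] that by simp
    show "G1 0 = 0" by (simp add: G1_def)
  qed
  define \<beta> where "\<beta> = G1 a / (2 * a)"
  define \<alpha> where "\<alpha> = G0 a - \<beta> * a^2"
  have tang2: "ereal (\<alpha> + \<beta> * t^2) \<le> h t + h (-t)" if "-1 < t" "t < 1" for t
  proof -
    have "\<alpha> + \<beta> * t^2 \<le> G0 t"
    proof (cases "0 \<le> t")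
      case True
      then show ?thesis using tang[of t] that unfolding \<alpha>_def \<beta>_def by (simp add: algebra_simps)
    next
      case False
      then have "\<alpha> + \<beta> * (-t)^2 \<le> G0 (-t)" using tang[of "-t"] that unfolding \<alpha>_def \<beta>_def by (simp add: algebra_simps)
      then show ?thesis by (simp add: G0_def add.commute)
    qed
    then show ?thesis using hD[of t] hD[of "-t"] that by (simp add: G0_def)
  qed
  have tang_end: "ereal (\<alpha> + \<beta>) \<le> h 1 + h (-1)"
  proof -
    have hneg: "((\<lambda>t. h (-t)) \<longlongrightarrow> h (-1)) (at_left 1)"
    proof -
      have "(h \<longlongrightarrow> h (-1)) (filtermap uminus (at_left 1))"
        using hcont_r at_right_minus[of "-1::real"] by simp
      then show ?thesis using tendsto_compose_filtermap[of h uminus] by (simp add: comp_def)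
    qed
    have hm1: "\<bar>h (-1)\<bar> \<noteq> \<infinity>" using finite_h by simp
    have lim: "((\<lambda>t. h t + h (-t)) \<longlongrightarrow> h 1 + h (-1)) (at_left 1)"
      by (rule tendsto_add_ereal_general1[OF hm1 hcont_l hneg])
    have lim2: "((\<lambda>t. ereal (\<alpha> + \<beta> * t^2)) \<longlongrightarrow> ereal (\<alpha> + \<beta> * 1^2)) (at_left 1)"
      by (intro tendsto_intros)
    have ev: "eventually (\<lambda>t. ereal (\<alpha> + \<beta> * t^2) \<le> h t + h (-t)) (at_left 1)"
    proof -
      have "eventually (\<lambda>s. s \<in> {-1<..<1}) (at_left (1::real))"
        by (intro eventually_at_left_real) simp
      then show ?thesis
        by eventually_elim (use tang2 in auto)
    qed
    have "ereal (\<alpha> + \<beta> * 1^2) \<le> h 1 + h (-1)"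
      by (rule tendsto_le[OF trivial_limit_at_left_real lim lim2 ev])
    then show ?thesis by simp
  qed
  have tang3: "ereal (\<alpha> + \<beta> * t^2) \<le> h t + h (-t)" if tl: "-1 \<le> t" "t \<le> 1" for t
  proof -
    consider "t = 1" | "t = -1" | "-1 < t \<and> t < 1" using tl by fastforce
    then show ?thesis
    proof cases
      case 1 then show ?thesis using tang_end by simp
    next
      case 2 then show ?thesis using tang_end by (simp add: add.commute)
    next
      case 3 then show ?thesis using tang2 by simp
    qed
  qed
  have Ucross: "ereal (n * (D 0 a + D 0 (-a))) \<le> U_h h z (cross_polytope :: (real^'n) set)"
    if nz: "norm z = 1" for z :: "real^'n"
  proof -
    have "ereal (n * (D 0 a + D 0 (-a))) = ereal (\<Sum>i\<in>UNIV. \<alpha> + \<beta> * (z$i)^2)"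
    proof -
      have "(\<Sum>i\<in>UNIV. (z$i)^2) = 1"
      proof -
        have "(\<Sum>i\<in>UNIV. (z$i)^2) = z \<bullet> z" by (simp add: inner_vec_def power2_eq_square)
        also have "\<dots> = (norm z)^2" by (simp add: power2_norm_eq_inner)
        finally show ?thesis using nz by simp
      qed
      then have "(\<Sum>i\<in>UNIV. \<alpha> + \<beta> * (z$i)^2) = n * \<alpha> + \<beta>"
        unfolding n_def by (simp add: sum.distrib sum_distrib_left[symmetric])
      also have "\<dots> = n * (D 0 a + D 0 (-a))"
        unfolding \<alpha>_def G0_def using a2 by (simp add: algebra_simps)
      finally show ?thesis by simp
    qed
    also have "\<dots> = (\<Sum>i\<in>UNIV. ereal (\<alpha> + \<beta> * (z$i)^2))" by (simp add: sum_ereal)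
    also have "\<dots> \<le> (\<Sum>i\<in>UNIV. h (z$i) + h (-(z$i)))"
    proof (rule sum_mono)
      fix i
      have "\<bar>z$i\<bar> \<le> 1" using component_le_norm_cart[of z i] nz by simp
      then show "ereal (\<alpha> + \<beta> * (z$i)^2) \<le> h (z$i) + h (-(z$i))"
        using tang3 by (simp add: abs_le_iff)
    qed
    also have "\<dots> = U_h h z (cross_polytope :: (real^'n) set)"
      unfolding U_h_def by (rule cross_sum[symmetric])
    finally show ?thesis .
  qed
  have "Q_h h C \<le> U_h h x C"
    unfolding Q_h_def by (rule INF_lower) (simp add: nx)
  also have "\<dots> \<le> ereal (n * (D 0 a + D 0 (-a)))" by (rule UC)
  also have "\<dots> \<le> Q_h h (cross_polytope :: (real^'n) set)"
    unfolding Q_h_def by (rule INF_greatest) (use Ucross in simp)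
  finally show ?thesis .
qed


end
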